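(* For the base family under the $\mathbf{c}$-weighted MaxWeight algorithm with $\|\boldsymbol\sigma^{(\epsilon)}\|^2\le\widetilde\sigma^2$, let $W_\perp(Q)=\|Q_{\perp\mathcal{K}_{\mathbf{c}}}\|_{\mathbf{c}}$ and $\Delta W_\perp(Q)=\big(W_\perp(Q(t+1))-W_\perp(Q(t))\big)\mathbb{1}\{Q(t)=Q\}$. There exist positive constants $\eta,\kappa,D$ and $\epsilon_0>0$, depending on $\widetilde\sigma,\boldsymbol\nu,A_{\max},\nu_{\min},\mathbf{c},n$ but not on $\epsilon$, such that for all $0<\epsilon\le\epsilon_0$: (i) $\mathbb{P}(|\Delta W_\perp(Q)|\le D)=1$ for all $Q$ (one may take $D=n\sqrt{c_{\max}}A_{\max}$); (ii) $\mathbb{E}[\Delta W_\perp(Q)\mid Q(t)=Q]\le-\eta$ for all $Q$ with $W_\perp(Q)\ge\kappa$.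
   Context: Fix $n\ge2$ and $\mathbf{c}$ with all $c_{ij}>0$, $c_{\max}=\max c_{ij}$. $\langle x,y\rangle_{\mathbf{c}}=\sum_{ij}c_{ij}x_{ij}y_{ij}$, $\|x\|^2_{\mathbf{c}}=\langle x,x\rangle_{\mathbf{c}}$. $\mathcal{P}$: permutation matrices; $\mathcal{F}$: nonnegative matrices with unit row and column sums. $\mathcal{K}_{\mathbf{c}}=\{x:x_{ij}=(w_i+\tilde w_j)/c_{ij},\ w,\tilde w\in\mathbb{R}^n_+\}$; $x_{\parallel\mathcal{K}_{\mathbf{c}}}$ is the $\|\cdot\|_{\mathbf{c}}$-nearest point of $\mathcal{K}_{\mathbf{c}}$, $x_{\perp\mathcal{K}_{\mathbf{c}}}=x-x_{\parallel\mathcal{K}_{\mathbf{c}}}$. Dynamics: $Q(t+1)=Q(t)+A(t)-S(t)+U(t)$, $U_{ij}(t)=\max(0,S_{ij}(t)-Q_{ij}(t)-A_{ij}(t))$, $S(t)\in\arg\max_{s\in\mathcal{P}}\langle Q(t),s\rangle_{\mathbf{c}}$ with uniform random tie-breaking. Base family: arrivals $A^{(\epsilon)}_{ij}(t)\in\{0,\dots,A_{\max}\}$ independent over $(i,j),t$, i.i.d. in $t$, mean $(1-\epsilon)\boldsymbol\nu$, $\boldsymbol\nu$ in the relative interior of $\mathcal{F}$ with $\nu_{\min}=\min\nu_{ij}>0$, variance vector $(\boldsymbol\sigma^{(\epsilon)})^2$. *)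

theory Defs
  imports "HOL-Analysis.Analysis" "HOL-Probability.Probability"
begin

text \<open>Matrices indexed by a finite type 'n (so n = CARD('n)) are functions 'n => 'n => real.\<close>

definition cinner :: "('n::finite \<Rightarrow> 'n \<Rightarrow> real) \<Rightarrow> ('n \<Rightarrow> 'n \<Rightarrow> real) \<Rightarrow> ('n \<Rightarrow> 'n \<Rightarrow> real) \<Rightarrow> real" where
  "cinner c x y = (\<Sum>i\<in>UNIV. \<Sum>j\<in>UNIV. c i j * x i j * y i j)"

definition cnorm :: "('n::finite \<Rightarrow> 'n \<Rightarrow> real) \<Rightarrow> ('n \<Rightarrow> 'n \<Rightarrow> real) \<Rightarrow> real" where
  "cnorm c x = sqrt (cinner c x x)"

definition perm_matrices :: "('n::finite \<Rightarrow> 'n \<Rightarrow> real) set" where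
  "perm_matrices = {s. \<exists>\<pi>. \<pi> permutes (UNIV :: 'n set) \<and> s = (\<lambda>i j. if \<pi> i = j then 1 else 0)}"

definition doubly_stochastic :: "(real^'n::finite^'n) set" where
  "doubly_stochastic = {x. (\<forall>i j. x $ i $ j \<ge> 0) \<and> (\<forall>i. (\<Sum>j\<in>UNIV. x $ i $ j) = 1)
                                \<and> (\<forall>j. (\<Sum>i\<in>UNIV. x $ i $ j) = 1)}"

definition cone_K :: "('n::finite \<Rightarrow> 'n \<Rightarrow> real) \<Rightarrow> ('n \<Rightarrow> 'n \<Rightarrow> real) set" where
  "cone_K c = {x. \<exists>w wt. (\<forall>i. w i \<ge> 0) \<and> (\<forall>j. wt j \<ge> 0) \<and>
                         (\<forall>i j. x i j = (w i + wt j) / c i j)}"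

text \<open>Nearest point of K_c to x in the c-weighted norm (exists and is unique since K_c is a
  closed convex cone and all c_ij > 0).\<close>
definition proj_K :: "('n::finite \<Rightarrow> 'n \<Rightarrow> real) \<Rightarrow> ('n \<Rightarrow> 'n \<Rightarrow> real) \<Rightarrow> ('n \<Rightarrow> 'n \<Rightarrow> real)" where
  "proj_K c x = (SOME y. y \<in> cone_K c \<and> (\<forall>z\<in>cone_K c. cnorm c (\<lambda>i j. x i j - y i j) \<le> cnorm c (\<lambda>i j. x i j - z i j)))"

definition perp_K :: "('n::finite \<Rightarrow> 'n \<Rightarrow> real) \<Rightarrow> ('n \<Rightarrow> 'n \<Rightarrow> real) \<Rightarrow> ('n \<Rightarrow> 'n \<Rightarrow> real)" where
  "perp_K c x = (\<lambda>i j. x i j - proj_K c x i j)"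

definition W_perp :: "('n::finite \<Rightarrow> 'n \<Rightarrow> real) \<Rightarrow> ('n \<Rightarrow> 'n \<Rightarrow> real) \<Rightarrow> real" where
  "W_perp c Q = cnorm c (perp_K c Q)"

definition maxweight_set :: "('n::finite \<Rightarrow> 'n \<Rightarrow> real) \<Rightarrow> ('n \<Rightarrow> 'n \<Rightarrow> real) \<Rightarrow> ('n \<Rightarrow> 'n \<Rightarrow> real) set" where
  "maxweight_set c Q = {s \<in> perm_matrices. \<forall>s'\<in>perm_matrices. cinner c Q s' \<le> cinner c Q s}"

definition unused :: "('n::finite \<Rightarrow> 'n \<Rightarrow> real) \<Rightarrow> ('n \<Rightarrow> 'n \<Rightarrow> real) \<Rightarrow> ('n \<Rightarrow> 'n \<Rightarrow> real) \<Rightarrow> ('n \<Rightarrow> 'n \<Rightarrow> real)" where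
  "unused Q A S = (\<lambda>i j. max 0 (S i j - Q i j - A i j))"

definition next_Q :: "('n::finite \<Rightarrow> 'n \<Rightarrow> real) \<Rightarrow> ('n \<Rightarrow> 'n \<Rightarrow> real) \<Rightarrow> ('n \<Rightarrow> 'n \<Rightarrow> real) \<Rightarrow> ('n \<Rightarrow> 'n \<Rightarrow> real)" where
  "next_Q Q A S = (\<lambda>i j. Q i j + A i j - S i j + unused Q A S i j)"

text \<open>One-step law of (A(t), S(t)) given Q(t)=Q: arrivals A_ij independent with laws p i j
  (values in nat), schedule chosen uniformly among MaxWeight schedules, independently of A.\<close>
definition step_pmf :: "('n::finite \<Rightarrow> 'n \<Rightarrow> real) \<Rightarrow> ('n \<Rightarrow> 'n \<Rightarrow> nat pmf) \<Rightarrow> ('n \<Rightarrow> 'n \<Rightarrow> real)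
     \<Rightarrow> (('n \<Rightarrow> 'n \<Rightarrow> real) \<times> ('n \<Rightarrow> 'n \<Rightarrow> real)) pmf" where
  "step_pmf c p Q = pair_pmf
      (map_pmf (\<lambda>a i j. real (a (i, j))) (Pi_pmf UNIV 0 (\<lambda>(i, j). p i j)))
      (pmf_of_set (maxweight_set c Q))"

text \<open>Delta W_perp on the event Q(t) = Q, as a function of (A(t), S(t)).\<close>
definition delta_W_perp :: "('n::finite \<Rightarrow> 'n \<Rightarrow> real) \<Rightarrow> ('n \<Rightarrow> 'n \<Rightarrow> real)
     \<Rightarrow> ('n \<Rightarrow> 'n \<Rightarrow> real) \<times> ('n \<Rightarrow> 'n \<Rightarrow> real) \<Rightarrow> real" where
  "delta_W_perp c Q AS = W_perp c (next_Q Q (fst AS) (snd AS)) - W_perp c Q"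

end

theory Submission
  imports Defs
begin


definition emb :: "('n::finite \<Rightarrow> 'n \<Rightarrow> real) \<Rightarrow> ('n \<Rightarrow> 'n \<Rightarrow> real) \<Rightarrow> real^('n \<times> 'n)" where
  "emb c x = (\<chi> k. sqrt (c (fst k) (snd k)) * x (fst k) (snd k))"

lemma sum_pairs: "(\<Sum>k\<in>(UNIV::('n::finite \<times> 'n) set). f (fst k) (snd k)) = (\<Sum>i\<in>UNIV. \<Sum>j\<in>UNIV. f i j)"
proof -
  have "(\<Sum>i\<in>UNIV. \<Sum>j\<in>UNIV. f i j) = (\<Sum>k\<in>UNIV \<times> UNIV. f (fst k) (snd k))"
    by (simp add: sum.cartesian_product case_prod_beta)
  then show ?thesis by simp
qed

lemma cinner_emb:
  assumes "\<forall>i j. c i j > 0"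
  shows "cinner c x y = inner (emb c x) (emb c y)"
proof -
  have "inner (emb c x) (emb c y) = (\<Sum>k\<in>UNIV. sqrt (c (fst k) (snd k)) * x (fst k) (snd k) * (sqrt (c (fst k) (snd k)) * y (fst k) (snd k)))"
    by (simp add: inner_vec_def emb_def)
  also have "\<dots> = (\<Sum>k\<in>UNIV. c (fst k) (snd k) * x (fst k) (snd k) * y (fst k) (snd k))"
  proof (rule sum.cong)
    fix k :: "'a \<times> 'a"
    have "sqrt (c (fst k) (snd k)) * sqrt (c (fst k) (snd k)) = c (fst k) (snd k)"
      using assms by (simp add: less_imp_le)
    then show "sqrt (c (fst k) (snd k)) * x (fst k) (snd k) * (sqrt (c (fst k) (snd k)) * y (fst k) (snd k)) = c (fst k) (snd k) * x (fst k) (snd k) * y (fst k) (snd k)"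
      by (metis (no_types, lifting) mult.assoc mult.left_commute)
  qed simp
  also have "\<dots> = cinner c x y" unfolding cinner_def by (rule sum_pairs[where f="\<lambda>i j. c i j * x i j * y i j"])
  finally show ?thesis by simp
qed

lemma cnorm_emb:
  assumes "\<forall>i j. c i j > 0"
  shows "cnorm c x = norm (emb c x)"
  by (simp add: cnorm_def cinner_emb[OF assms] norm_eq_sqrt_inner)

lemma emb_diff: "emb c (\<lambda>i j. x i j - y i j) = emb c x - emb c y"
  by (simp add: emb_def vec_eq_iff algebra_simps)
lemma emb_add: "emb c (\<lambda>i j. x i j + y i j) = emb c x + emb c y"
  by (simp add: emb_def vec_eq_iff algebra_simps)
lemma emb_scale: "emb c (\<lambda>i j. a * x i j) = a *\<^sub>R emb c x"
  by (simp add: emb_def vec_eq_iff algebra_simps)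
lemma emb_nth: "emb c x $ (i,j) = sqrt (c i j) * x i j"
  by (simp add: emb_def)

lemma cinner_sym: "cinner c x y = cinner c y x"
  by (simp add: cinner_def mult.commute mult.left_commute)

lemma cinner_diff_left: "cinner c (\<lambda>i j. x i j - y i j) z = cinner c x z - cinner c y z"
  by (simp add: cinner_def algebra_simps sum_subtractf)
lemma cinner_add_left: "cinner c (\<lambda>i j. x i j + y i j) z = cinner c x z + cinner c y z"
  by (simp add: cinner_def algebra_simps sum.distrib)
lemma cinner_diff_right: "cinner c z (\<lambda>i j. x i j - y i j) = cinner c z x - cinner c z y"
  by (simp add: cinner_def algebra_simps sum_subtractf)
lemma cinner_add_right: "cinner c z (\<lambda>i j. x i j + y i j) = cinner c z x + cinner c z y"
  by (simp add: cinner_def algebra_simps sum.distrib)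
lemma cinner_scale_right: "cinner c z (\<lambda>i j. a * x i j) = a * cinner c z x"
  by (simp add: cinner_def algebra_simps sum_distrib_left)


lemma cone_K_zero: "(\<lambda>i j. 0) \<in> cone_K c"
  unfolding cone_K_def mem_Collect_eq by (rule exI[of _ "\<lambda>_. 0"], rule exI[of _ "\<lambda>_. 0"]) simp

lemma cone_K_add: "x \<in> cone_K c \<Longrightarrow> y \<in> cone_K c \<Longrightarrow> (\<lambda>i j. x i j + y i j) \<in> cone_K c"
proof -
  assume "x \<in> cone_K c" "y \<in> cone_K c"
  then obtain w wt v vt where "\<forall>i. w i \<ge> 0" "\<forall>j. wt j \<ge> 0" "\<forall>i j. x i j = (w i + wt j) / c i j"
     "\<forall>i. v i \<ge> 0" "\<forall>j. vt j \<ge> 0" "\<forall>i j. y i j = (v i + vt j) / c i j"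
    unfolding cone_K_def by blast
  then show ?thesis unfolding cone_K_def mem_Collect_eq
    by (intro exI[of _ "\<lambda>i. w i + v i"] exI[of _ "\<lambda>i. wt i + vt i"]) (auto simp: add_divide_distrib)
qed

lemma cone_K_scale: "x \<in> cone_K c \<Longrightarrow> a \<ge> 0 \<Longrightarrow> (\<lambda>i j. a * x i j) \<in> cone_K c"
proof -
  assume "x \<in> cone_K c" "a \<ge> 0"
  then obtain w wt where "\<forall>i. w i \<ge> 0" "\<forall>j. wt j \<ge> 0" "\<forall>i j. x i j = (w i + wt j) / c i j"
    unfolding cone_K_def by blast
  then show ?thesis unfolding cone_K_def mem_Collect_eq using \<open>a \<ge> 0\<close>
    by (intro exI[of _ "\<lambda>i. a * w i"] exI[of _ "\<lambda>i. a * wt i"]) (auto simp: algebra_simps)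
qed

lemma cone_K_nonneg: "\<forall>i j. c i j > 0 \<Longrightarrow> x \<in> cone_K c \<Longrightarrow> x i j \<ge> 0"
  unfolding cone_K_def by (auto intro!: divide_nonneg_pos add_nonneg_nonneg)

lemma proj_exists:
  assumes c_pos: "\<forall>i j. c i j > 0"
  shows "\<exists>y. y \<in> cone_K c \<and> (\<forall>z\<in>cone_K c. cnorm c (\<lambda>i j. x i j - y i j) \<le> cnorm c (\<lambda>i j. x i j - z i j))"
proof -
  define N where "N = norm (emb c x)"
  define T where "T = (\<Sum>i\<in>UNIV. \<Sum>j\<in>UNIV. sqrt (c i j))"
  define R where "R = 2*N*T"
  define km where "km p = (\<lambda>i j. (fst p $ i + snd p $ j) / c i j)" for p :: "(real^'a) \<times> (real^'a)"
  define B where "B = cbox (0::real^'a) (\<chi> i. R) \<times> cbox (0::real^'a) (\<chi> i. R)"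
  define f where "f p = norm (emb c x - emb c (km p))" for p
  have N0: "N \<ge> 0" unfolding N_def by simp
  have T0: "T \<ge> 0" unfolding T_def using c_pos by (intro sum_nonneg) (auto simp: less_imp_le)
  have R0: "R \<ge> 0" unfolding R_def using N0 T0 by simp
  have sqT: "sqrt (c i j) \<le> T" for i j
  proof -
    have "sqrt (c i j) \<le> (\<Sum>j\<in>UNIV. sqrt (c i j))" using c_pos by (intro member_le_sum) (auto simp: less_imp_le)
    also have "\<dots> \<le> T" unfolding T_def by (rule member_le_sum) (use c_pos in \<open>auto intro: sum_nonneg simp: less_imp_le\<close>)
    finally show ?thesis .
  qed
  have cont: "continuous_on B f"
    unfolding f_def km_def emb_def
    by (intro continuous_intros) (use c_pos in \<open>auto simp: less_imp_neq[symmetric]\<close>)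
  have Bne: "(0, 0) \<in> B" unfolding B_def using R0 by (auto simp: mem_box_cart)
  have "compact B" unfolding B_def by (intro compact_Times compact_cbox)
  then obtain p0 where p0: "p0 \<in> B" "\<forall>p\<in>B. f p0 \<le> f p"
    using continuous_attains_inf[OF _ _ cont] Bne by blast
  have fN: "f p0 \<le> N"
  proof -
    have "f p0 \<le> f (0,0)" using p0 Bne by blast
    also have "emb c (km (0,0)) = 0" by (simp add: km_def emb_def vec_eq_iff)
    then have "f (0,0) = N" by (simp add: f_def N_def)
    finally show ?thesis .
  qed
  let ?y = "km p0"
  have yK: "?y \<in> cone_K c"
    using p0(1) unfolding cone_K_def mem_Collect_eq km_def B_def
    by (intro exI[of _ "\<lambda>i. fst p0 $ i"] exI[of _ "\<lambda>i. snd p0 $ i"]) (auto simp: mem_box_cart mem_Times_iff)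
  have main: "f p0 \<le> norm (emb c x - emb c z)" if zK: "z \<in> cone_K c" for z
  proof -
    obtain w wt where w: "\<forall>i. w i \<ge> 0" "\<forall>j. wt j \<ge> 0" "\<forall>i j. z i j = (w i + wt j) / c i j"
      using zK unfolding cone_K_def by blast
    show ?thesis
    proof (cases "\<forall>i. w i \<le> R \<and> wt i \<le> R")
      case True
      define p :: "(real^'a) \<times> (real^'a)" where "p = ((\<chi> i. w i), (\<chi> i. wt i))"
      have "p \<in> B" using True w unfolding p_def B_def by (auto simp: mem_box_cart)
      moreover have "km p = z" using w unfolding p_def km_def by (auto simp: fun_eq_iff)
      ultimately show ?thesis using p0 unfolding f_def by metis
    next
      case False
      then obtain i j where ij: "w i > R \<or> wt j > R" by (meson not_le)
      have cpos: "c i j > 0" using c_pos by blast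
      have sc: "sqrt (c i j) > 0" using cpos by simp
      have ssq: "sqrt (c i j) * sqrt (c i j) = c i j" using cpos by simp
      have big: "w i + wt j > R" using ij w by (meson add_increasing add_increasing2 less_le_trans order_refl)
      have "R \<ge> 2 * N * sqrt (c i j)" unfolding R_def using N0 sqT[of i j] by (simp add: mult_left_mono)
      then have "w i + wt j \<ge> 2 * N * sqrt (c i j)" using big by linarith
      then have "(w i + wt j) / sqrt (c i j) \<ge> 2 * N" using sc by (simp add: pos_le_divide_eq)
      moreover have "emb c z $ (i,j) = (w i + wt j) / sqrt (c i j)"
        using w(3) sc ssq by (simp add: emb_nth field_simps)
      moreover have "emb c x $ (i,j) \<le> N" unfolding N_def
        using component_le_norm_cart[of "emb c x" "(i,j)"] by linarith
      moreover have "\<bar>(emb c x - emb c z) $ (i,j)\<bar> \<le> norm (emb c x - emb c z)"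
        by (rule component_le_norm_cart)
      ultimately have "N \<le> norm (emb c x - emb c z)" by simp
      then show ?thesis using fN by linarith
    qed
  qed
  show ?thesis
    apply (rule exI[of _ ?y])
    using yK main unfolding f_def by (simp add: cnorm_emb[OF c_pos] emb_diff)
qed


lemma proj_K_min:
  assumes c_pos: "\<forall>i j. c i j > 0"
  shows "proj_K c x \<in> cone_K c"
    and "\<And>z. z \<in> cone_K c \<Longrightarrow> norm (emb c x - emb c (proj_K c x)) \<le> norm (emb c x - emb c z)"
proof -
  have "proj_K c x \<in> cone_K c \<and> (\<forall>z\<in>cone_K c. cnorm c (\<lambda>i j. x i j - proj_K c x i j) \<le> cnorm c (\<lambda>i j. x i j - z i j))"
    unfolding proj_K_def by (rule someI_ex[OF proj_exists[OF c_pos]])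
  then show "proj_K c x \<in> cone_K c"
    and "\<And>z. z \<in> cone_K c \<Longrightarrow> norm (emb c x - emb c (proj_K c x)) \<le> norm (emb c x - emb c z)"
    by (auto simp: cnorm_emb[OF c_pos] emb_diff)
qed

lemma W_perp_emb:
  assumes c_pos: "\<forall>i j. c i j > 0"
  shows "W_perp c x = norm (emb c x - emb c (proj_K c x))"
  unfolding W_perp_def perp_K_def by (simp add: cnorm_emb[OF c_pos] emb_diff)

lemma W_perp_le:
  assumes c_pos: "\<forall>i j. c i j > 0" and "z \<in> cone_K c"
  shows "W_perp c x \<le> norm (emb c x - emb c z)"
  using proj_K_min(2)[OF c_pos assms(2)] W_perp_emb[OF c_pos] by simp

lemma W_perp_lip:
  assumes c_pos: "\<forall>i j. c i j > 0"
  shows "\<bar>W_perp c x - W_perp c x'\<bar> \<le> norm (emb c x - emb c x')"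
proof -
  have a: "W_perp c x \<le> W_perp c x' + norm (emb c x - emb c x')" for x x'
  proof -
    have "W_perp c x \<le> norm (emb c x - emb c (proj_K c x'))"
      by (rule W_perp_le[OF c_pos proj_K_min(1)[OF c_pos]])
    also have "\<dots> \<le> norm (emb c x' - emb c (proj_K c x')) + norm (emb c x - emb c x')"
      by (metis add.commute diff_add_cancel norm_triangle_ineq add_diff_eq)
    finally show ?thesis using W_perp_emb[OF c_pos, of x'] by simp
  qed
  show ?thesis using a[of x x'] a[of x' x] by (simp add: norm_minus_commute)
qed

lemma proj_dot:
  assumes c_pos: "\<forall>i j. c i j > 0" and zK: "z \<in> cone_K c"
  shows "inner (emb c x - emb c (proj_K c x)) (emb c z - emb c (proj_K c x)) \<le> 0"
proof (rule ccontr)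
  let ?y = "proj_K c x"
  assume "\<not> ?thesis"
  then have "inner (emb c x - emb c ?y) (emb c z - emb c ?y) > 0" by simp
  then obtain u where u: "u > 0" "u \<le> 1" "dist (emb c ?y + u *\<^sub>R (emb c z - emb c ?y)) (emb c x) < dist (emb c ?y) (emb c x)"
    using closer_point_lemma by blast
  define v where "v = (\<lambda>i j. (1 - u) * ?y i j + u * z i j)"
  have vK: "v \<in> cone_K c" unfolding v_def
    using u by (intro cone_K_add cone_K_scale proj_K_min(1)[OF c_pos] zK) auto
  have "emb c v = emb c ?y + u *\<^sub>R (emb c z - emb c ?y)"
    unfolding v_def emb_add emb_scale by (simp add: algebra_simps)
  then have "norm (emb c x - emb c v) < norm (emb c x - emb c ?y)"
    using u(3) by (simp add: dist_norm norm_minus_commute)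
  then show False using proj_K_min(2)[OF c_pos vK, of x] by linarith
qed

lemma perp_props:
  assumes c_pos: "\<forall>i j. c i j > 0"
  shows "cinner c (perp_K c x) (proj_K c x) = 0"
    and "\<And>k. k \<in> cone_K c \<Longrightarrow> cinner c (perp_K c x) k \<le> 0"
    and "cinner c (perp_K c x) (perp_K c x) = (W_perp c x)\<^sup>2"
proof -
  let ?y = "proj_K c x"
  let ?q = "emb c x - emb c ?y"
  have qe: "emb c (perp_K c x) = ?q" unfolding perp_K_def emb_diff ..
  have yK: "?y \<in> cone_K c" by (rule proj_K_min(1)[OF c_pos])
  have "inner ?q (emb c (\<lambda>i j. 0) - emb c ?y) \<le> 0" by (rule proj_dot[OF c_pos cone_K_zero])
  moreover have "inner ?q (emb c (\<lambda>i j. 2 * ?y i j) - emb c ?y) \<le> 0"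
    by (rule proj_dot[OF c_pos cone_K_scale[OF yK]]) simp
  moreover have "emb c (\<lambda>i j. 0) = 0" by (simp add: emb_def vec_eq_iff)
  ultimately have "inner ?q (emb c ?y) = 0" unfolding emb_scale
    by (simp add: inner_diff_right algebra_simps)
  then show "cinner c (perp_K c x) ?y = 0" by (simp add: cinner_emb[OF c_pos] qe)
  show "cinner c (perp_K c x) k \<le> 0" if kK: "k \<in> cone_K c" for k
  proof -
    have "inner ?q (emb c (\<lambda>i j. ?y i j + k i j) - emb c ?y) \<le> 0"
      by (rule proj_dot[OF c_pos cone_K_add[OF yK kK]])
    then show ?thesis by (simp add: cinner_emb[OF c_pos] qe emb_add)
  qed
  show "cinner c (perp_K c x) (perp_K c x) = (W_perp c x)\<^sup>2"
    by (simp add: cinner_emb[OF c_pos] qe W_perp_emb[OF c_pos] power2_norm_eq_inner)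
qed

lemma perp_rowsum:
  assumes c_pos: "\<forall>i j. c i j > 0"
  shows "(\<Sum>j\<in>UNIV. perp_K c x i0 j) \<le> 0"
proof -
  let ?k = "\<lambda>i j. ((if i = i0 then 1 else 0) + 0) / c i j"
  have "?k \<in> cone_K c" unfolding cone_K_def mem_Collect_eq
    by (intro exI[of _ "\<lambda>i. if i = i0 then 1 else 0"] exI[of _ "\<lambda>_. 0"]) auto
  then have "cinner c (perp_K c x) ?k \<le> 0" by (rule perp_props(2)[OF c_pos])
  moreover have "cinner c (perp_K c x) ?k = (\<Sum>j\<in>UNIV. perp_K c x i0 j)"
  proof -
    have "cinner c (perp_K c x) ?k = (\<Sum>i\<in>UNIV. \<Sum>j\<in>UNIV. if i = i0 then perp_K c x i j else 0)"
      unfolding cinner_def using c_pos by (intro sum.cong refl) (auto simp: less_imp_neq[symmetric])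
    also have "\<dots> = (\<Sum>j\<in>UNIV. perp_K c x i0 j)"
      by (simp add: sum.swap[of _ UNIV UNIV] if_distrib sum.delta cong: if_cong)
    finally show ?thesis .
  qed
  ultimately show ?thesis by simp
qed

lemma perp_colsum:
  assumes c_pos: "\<forall>i j. c i j > 0"
  shows "(\<Sum>i\<in>UNIV. perp_K c x i j0) \<le> 0"
proof -
  let ?k = "\<lambda>i j. (0 + (if j = j0 then 1 else 0)) / c i j"
  have "?k \<in> cone_K c" unfolding cone_K_def mem_Collect_eq
    by (intro exI[of _ "\<lambda>_. 0"] exI[of _ "\<lambda>j. if j = j0 then 1 else 0"]) auto
  then have "cinner c (perp_K c x) ?k \<le> 0" by (rule perp_props(2)[OF c_pos])
  moreover have "cinner c (perp_K c x) ?k = (\<Sum>i\<in>UNIV. perp_K c x i j0)"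
  proof -
    have "cinner c (perp_K c x) ?k = (\<Sum>i\<in>UNIV. \<Sum>j\<in>UNIV. if j = j0 then perp_K c x i j else 0)"
      unfolding cinner_def using c_pos by (intro sum.cong refl) (auto simp: less_imp_neq[symmetric])
    also have "\<dots> = (\<Sum>i\<in>UNIV. perp_K c x i j0)"
      by (simp add: sum.delta' cong: if_cong)
    finally show ?thesis .
  qed
  ultimately show ?thesis by simp
qed


lemma hall:
  fixes N :: "'a \<Rightarrow> 'b set"
  assumes "finite I" "\<forall>i\<in>I. finite (N i)" "\<forall>S\<subseteq>I. card S \<le> card (\<Union> (N ` S))"
  shows "\<exists>f. inj_on f I \<and> (\<forall>i\<in>I. f i \<in> N i)"
  using assms
proof (induction "card I" arbitrary: I N rule: less_induct)
  case less
  show ?case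
  proof (cases "I = {}")
    case True then show ?thesis by auto
  next
    case Ine: False
    show ?thesis
    proof (cases "\<exists>S. S \<subseteq> I \<and> S \<noteq> {} \<and> S \<noteq> I \<and> card (\<Union> (N ` S)) = card S")
      case True
      then obtain S where S: "S \<subseteq> I" "S \<noteq> {}" "S \<noteq> I" "card (\<Union> (N ` S)) = card S" by blast
      define U where "U = \<Union> (N ` S)"
      have finS: "finite S" using S(1) less.prems(1) finite_subset by blast
      have finU: "finite U" unfolding U_def using finS S(1) less.prems(2) by auto
      have cS: "card S < card I" using S less.prems(1) by (meson psubsetI psubset_card_mono)
      have prS1: "\<forall>i\<in>S. finite (N i)" using S(1) less.prems(2) by blast
      have prS2: "\<forall>T\<subseteq>S. card T \<le> card (\<Union> (N ` T))" using S(1) less.prems(3) by blast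
      obtain f1 where f1: "inj_on f1 S" "\<forall>i\<in>S. f1 i \<in> N i"
        using less.hyps[OF cS finS prS1 prS2] by blast
      define N2 where "N2 i = N i - U" for i
      have finIS: "finite (I - S)" using less.prems(1) by simp
      have cIS: "card (I - S) < card I"
      proof -
        have "card (I - S) = card I - card S" by (rule card_Diff_subset[OF finS S(1)])
        moreover have "card S > 0" using finS S(2) by (simp add: card_gt_0_iff)
        moreover have "card S \<le> card I" using cS by simp
        ultimately show ?thesis by linarith
      qed
      have hall2: "\<forall>T\<subseteq>I - S. card T \<le> card (\<Union> (N2 ` T))"
      proof (intro allI impI)
        fix T assume T: "T \<subseteq> I - S"
        have finT: "finite T" using T finIS finite_subset by blast
        have eq: "\<Union> (N2 ` T) = \<Union> (N ` (T \<union> S)) - U" unfolding N2_def U_def by auto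
        have sub: "U \<subseteq> \<Union> (N ` (T \<union> S))" unfolding U_def by auto
        have "card (\<Union> (N2 ` T)) = card (\<Union> (N ` (T \<union> S))) - card U"
          using eq card_Diff_subset[OF finU sub] by simp
        moreover have "card (T \<union> S) \<le> card (\<Union> (N ` (T \<union> S)))" using less.prems(3) T S(1) by (meson Diff_subset Un_least dual_order.trans)
        moreover have "card (T \<union> S) = card T + card S" using T finT finS card_Un_disjoint by blast
        moreover have "card U = card S" using S(4) U_def by simp
        ultimately show "card T \<le> card (\<Union> (N2 ` T))" by linarith
      qed
      obtain f2 where f2: "inj_on f2 (I - S)" "\<forall>i\<in>I - S. f2 i \<in> N2 i"
      proof -
        have "\<forall>i\<in>I - S. finite (N2 i)" using less.prems(2) unfolding N2_def by auto
        then show ?thesis using less.hyps[OF cIS finIS _ hall2] that by blast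
      qed
      define f where "f i = (if i \<in> S then f1 i else f2 i)" for i
      show ?thesis
      proof (intro exI conjI)
        show "inj_on f I" unfolding inj_on_def
        proof (intro ballI impI)
          fix i j assume ij: "i \<in> I" "j \<in> I" "f i = f j"
          show "i = j"
          proof (cases "i \<in> S"; cases "j \<in> S")
            assume "i \<in> S" "j \<in> S" then show ?thesis using ij f1 unfolding f_def inj_on_def by auto
          next
            assume "i \<notin> S" "j \<notin> S" then show ?thesis using ij f2 unfolding f_def inj_on_def by auto
          next
            assume a: "i \<in> S" "j \<notin> S"
            then have "f i \<in> U" using f1 unfolding f_def U_def by auto
            moreover have "f j \<notin> U"
            proof -
              have "j \<in> I - S" using a ij by simp
              then have "f2 j \<notin> U" using f2(2) unfolding N2_def by blast
              then show ?thesis using a unfolding f_def by simp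
            qed
            ultimately show ?thesis using ij by simp
          next
            assume a: "i \<notin> S" "j \<in> S"
            then have "f j \<in> U" using f1 unfolding f_def U_def by auto
            moreover have "f i \<notin> U"
            proof -
              have "i \<in> I - S" using a ij by simp
              then have "f2 i \<notin> U" using f2(2) unfolding N2_def by blast
              then show ?thesis using a unfolding f_def by simp
            qed
            ultimately show ?thesis using ij by simp
          qed
        qed
        show "\<forall>i\<in>I. f i \<in> N i" using f1 f2 unfolding f_def N2_def by auto
      qed
    next
      case NC: False
      obtain i0 where i0: "i0 \<in> I" using Ine by blast
      have "card {i0} \<le> card (\<Union> (N ` {i0}))" using less.prems(3) i0 by blast
      then have "N i0 \<noteq> {}" by auto
      then obtain a where a: "a \<in> N i0" by blast
      define I' where "I' = I - {i0}"
      define N' where "N' i = N i - {a}" for i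
      have finI': "finite I'" unfolding I'_def using less.prems(1) by simp
      have cI': "card I' < card I" unfolding I'_def using i0 less.prems(1)
        by (metis card_Diff1_less)
      have hall': "\<forall>S\<subseteq>I'. card S \<le> card (\<Union> (N' ` S))"
      proof (intro allI impI)
        fix S assume S: "S \<subseteq> I'"
        show "card S \<le> card (\<Union> (N' ` S))"
        proof (cases "S = {}")
          case True then show ?thesis by simp
        next
          case False
          have SI: "S \<subseteq> I" using S I'_def by auto
          have "S \<noteq> I" using S i0 I'_def by auto
          have ge: "card S \<le> card (\<Union> (N ` S))" using less.prems(3) SI by blast
          then have "card (\<Union> (N ` S)) \<noteq> card S" using NC SI False \<open>S \<noteq> I\<close> by blast
          hence gt: "card S + 1 \<le> card (\<Union> (N ` S))" using ge by linarith
          have eq: "\<Union> (N' ` S) = \<Union> (N ` S) - {a}" unfolding N'_def by auto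
          have "card (\<Union> (N ` S)) - 1 \<le> card (\<Union> (N ` S) - {a})" by (simp add: card_Diff_singleton_if)
          then show ?thesis using gt unfolding eq by linarith
        qed
      qed
      obtain f' where f': "inj_on f' I'" "\<forall>i\<in>I'. f' i \<in> N' i"
      proof -
        have "\<forall>i\<in>I'. finite (N' i)" using less.prems(2) unfolding N'_def I'_def by auto
        then show ?thesis using less.hyps[OF cI' finI' _ hall'] that by blast
      qed
      define f where "f = f'(i0 := a)"
      have II: "I = insert i0 I'" unfolding I'_def using i0 by auto
      have i0I': "i0 \<notin> I'" unfolding I'_def by simp
      have "inj_on f I'" using f'(1) i0I' unfolding f_def by (simp add: inj_on_def)
      moreover have "f i0 \<notin> f ` (I' - {i0})" using f'(2) i0I' unfolding f_def N'_def by auto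
      ultimately have "inj_on f I" unfolding II by simp
      moreover have "\<forall>i\<in>I. f i \<in> N i" using f'(2) a i0I' unfolding II f_def N'_def by auto
      ultimately show ?thesis by blast
    qed
  qed
qed



lemma ds_perm_support:
  fixes x :: "'n::finite \<Rightarrow> 'n \<Rightarrow> real"
  assumes nn: "\<forall>i j. x i j \<ge> 0" and rows: "\<forall>i. (\<Sum>j\<in>UNIV. x i j) = t"
    and cols: "\<forall>j. (\<Sum>i\<in>UNIV. x i j) = t" and tpos: "t > 0"
  shows "\<exists>\<pi>. \<pi> permutes UNIV \<and> (\<forall>i. x i (\<pi> i) > 0)"
proof -
  define N where "N i = {j. x i j > 0}" for i
  have hc: "\<forall>S\<subseteq>(UNIV::'n set). card S \<le> card (\<Union> (N ` S))"
  proof (intro allI impI)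
    fix S :: "'n set"
    define U where "U = \<Union> (N ` S)"
    have "t * card S = (\<Sum>i\<in>S. \<Sum>j\<in>UNIV. x i j)" using rows by simp
    also have "\<dots> = (\<Sum>i\<in>S. \<Sum>j\<in>U. x i j)"
    proof (rule sum.cong[OF refl])
      fix i assume iS: "i \<in> S"
      show "(\<Sum>j\<in>UNIV. x i j) = (\<Sum>j\<in>U. x i j)"
      proof (rule sum.mono_neutral_right)
        show "\<forall>j\<in>UNIV - U. x i j = 0"
        proof
          fix j assume "j \<in> UNIV - U"
          then have "\<not> x i j > 0" using iS unfolding U_def N_def by auto
          then show "x i j = 0" using nn by (metis order_le_less)
        qed
      qed auto
    qed
    also have "\<dots> \<le> (\<Sum>i\<in>UNIV. \<Sum>j\<in>U. x i j)"
      by (rule sum_mono2) (auto intro: sum_nonneg simp: nn)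
    also have "\<dots> = (\<Sum>j\<in>U. \<Sum>i\<in>UNIV. x i j)" by (rule sum.swap)
    also have "\<dots> = t * card U" using cols by simp
    finally have "t * card S \<le> t * card U" .
    then have "card S \<le> card U" using tpos by simp
    then show "card S \<le> card (\<Union> (N ` S))" unfolding U_def .
  qed
  obtain f where f: "inj_on f UNIV" "\<forall>i. f i \<in> N i"
    using hall[of "UNIV::'n set" N] hc by auto
  have "bij f" using f(1) finite_UNIV_inj_surj[of f] by (simp add: bij_def)
  then have "f permutes UNIV" by (intro bij_imp_permutes) auto
  then show ?thesis using f(2) unfolding N_def by auto
qed

definition pmax :: "('n::finite \<Rightarrow> 'n \<Rightarrow> real) \<Rightarrow> real" where
  "pmax M = Max ((\<lambda>\<pi>. \<Sum>i\<in>UNIV. M i (\<pi> i)) ` {\<pi>. \<pi> permutes (UNIV::'n set)})"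

lemma pmax_ge: "\<pi> permutes (UNIV::'n::finite set) \<Longrightarrow> (\<Sum>i\<in>UNIV. M i (\<pi> i)) \<le> pmax M"
  unfolding pmax_def by (rule Max_ge) (auto intro: finite_imageI finite_permutations)

lemma pmax_attained: "\<exists>\<pi>. \<pi> permutes (UNIV::'n::finite set) \<and> pmax M = (\<Sum>i\<in>UNIV. M i (\<pi> i))"
proof -
  have "pmax M \<in> (\<lambda>\<pi>. \<Sum>i\<in>UNIV. M i (\<pi> i)) ` {\<pi>. \<pi> permutes (UNIV::'n set)}"
    unfolding pmax_def by (rule Max_in) (auto intro: finite_imageI finite_permutations permutes_id)
  then show ?thesis by auto
qed

lemma birk:
  fixes x M :: "'n::finite \<Rightarrow> 'n \<Rightarrow> real"
  assumes "\<forall>i j. x i j \<ge> 0" "\<forall>i. (\<Sum>j\<in>UNIV. x i j) = t" "\<forall>j. (\<Sum>i\<in>UNIV. x i j) = t" "t \<ge> 0"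
  shows "(\<Sum>i\<in>UNIV. \<Sum>j\<in>UNIV. M i j * x i j) \<le> t * pmax M"
  using assms
proof (induction "card {p. x (fst p) (snd p) \<noteq> 0}" arbitrary: x t rule: less_induct)
  case less
  note nn = less.prems(1) and rows = less.prems(2) and cols = less.prems(3)
  show ?case
  proof (cases "t = 0")
    case True
    have "x i j = 0" for i j
    proof -
      have "(\<Sum>j\<in>UNIV. x i j) = 0" using rows True by simp
      then show ?thesis using nn by (simp add: sum_nonneg_eq_0_iff)
    qed
    then show ?thesis using True by simp
  next
    case False
    then have tpos: "t > 0" using less.prems(4) by simp
    obtain \<pi> where \<pi>: "\<pi> permutes UNIV" "\<forall>i. x i (\<pi> i) > 0"
      using ds_perm_support[OF nn rows cols tpos] by blast
    define m where "m = Min (range (\<lambda>i. x i (\<pi> i)))"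
    have "m \<in> range (\<lambda>i. x i (\<pi> i))" unfolding m_def by (rule Min_in) auto
    then obtain i0 where i0: "x i0 (\<pi> i0) = m" by auto
    have mle: "m \<le> x i (\<pi> i)" for i unfolding m_def by (rule Min_le) auto
    have mpos: "m > 0" using i0 \<pi>(2) by metis
    have mt: "m \<le> t"
    proof -
      have "x i0 (\<pi> i0) \<le> (\<Sum>j\<in>UNIV. x i0 j)" by (rule member_le_sum) (auto simp: nn)
      then show ?thesis using i0 rows by simp
    qed
    define x' where "x' i j = x i j - (if \<pi> i = j then m else 0)" for i j
    have nn': "\<forall>i j. x' i j \<ge> 0" unfolding x'_def using mle nn by auto
    have rows': "\<forall>i. (\<Sum>j\<in>UNIV. x' i j) = t - m"
      unfolding x'_def using rows by (simp add: sum_subtractf)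
    have colm: "(\<Sum>i\<in>UNIV. (if \<pi> i = j then m else 0)) = m" for j
    proof -
      have "(\<Sum>i\<in>UNIV. (if \<pi> i = j then m else 0)) = (\<Sum>i\<in>UNIV. (if inv \<pi> j = i then m else 0))"
        using permutes_inv_eq[OF \<pi>(1)] by (intro sum.cong) auto
      then show ?thesis by simp
    qed
    have cols': "\<forall>j. (\<Sum>i\<in>UNIV. x' i j) = t - m"
      unfolding x'_def using cols colm by (simp add: sum_subtractf)
    have sub: "{p. x' (fst p) (snd p) \<noteq> 0} \<subset> {p. x (fst p) (snd p) \<noteq> 0}"
    proof
      show "{p. x' (fst p) (snd p) \<noteq> 0} \<subseteq> {p. x (fst p) (snd p) \<noteq> 0}"
        unfolding x'_def using \<pi>(2) by (auto split: if_splits simp: less_imp_neq[symmetric] less_imp_neq)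
      have "(i0, \<pi> i0) \<in> {p. x (fst p) (snd p) \<noteq> 0}" using \<pi>(2) by (auto simp: less_imp_neq[symmetric])
      moreover have "(i0, \<pi> i0) \<notin> {p. x' (fst p) (snd p) \<noteq> 0}" unfolding x'_def using i0 by simp
      ultimately show "{p. x' (fst p) (snd p) \<noteq> 0} \<noteq> {p. x (fst p) (snd p) \<noteq> 0}" by blast
    qed
    have "card {p. x' (fst p) (snd p) \<noteq> 0} < card {p. x (fst p) (snd p) \<noteq> 0}"
      by (rule psubset_card_mono[OF _ sub]) simp
    then have IH: "(\<Sum>i\<in>UNIV. \<Sum>j\<in>UNIV. M i j * x' i j) \<le> (t - m) * pmax M"
      using less.hyps nn' rows' cols' mt by simp
    have split: "(\<Sum>i\<in>UNIV. \<Sum>j\<in>UNIV. M i j * x i j)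
        = (\<Sum>i\<in>UNIV. \<Sum>j\<in>UNIV. M i j * x' i j) + m * (\<Sum>i\<in>UNIV. M i (\<pi> i))"
    proof -
      have "M i j * x i j = M i j * x' i j + (if \<pi> i = j then m * M i j else 0)" for i j
        unfolding x'_def by (simp add: algebra_simps)
      then have "(\<Sum>i\<in>UNIV. \<Sum>j\<in>UNIV. M i j * x i j)
          = (\<Sum>i\<in>UNIV. \<Sum>j\<in>UNIV. M i j * x' i j) + (\<Sum>i\<in>UNIV. \<Sum>j\<in>UNIV. (if \<pi> i = j then m * M i j else 0))"
        by (simp add: sum.distrib)
      also have "(\<Sum>i\<in>UNIV. \<Sum>j\<in>UNIV. (if \<pi> i = j then m * M i j else 0)) = m * (\<Sum>i\<in>UNIV. M i (\<pi> i))"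
        by (simp add: sum_distrib_left)
      finally show ?thesis .
    qed
    have "m * (\<Sum>i\<in>UNIV. M i (\<pi> i)) \<le> m * pmax M"
      using pmax_ge[OF \<pi>(1)] mpos by (simp add: mult_left_mono)
    then show ?thesis using split IH by (simp add: algebra_simps)
  qed
qed


lemma dominate:
  fixes y :: "'n::finite \<Rightarrow> 'n \<Rightarrow> real"
  assumes nn: "\<forall>i j. y i j \<ge> 0" and rows: "\<forall>i. (\<Sum>j\<in>UNIV. y i j) \<le> 1"
    and cols: "\<forall>j. (\<Sum>i\<in>UNIV. y i j) \<le> 1"
  shows "\<exists>z. (\<forall>i j. z i j \<ge> y i j) \<and> (\<forall>i. (\<Sum>j\<in>UNIV. z i j) = 1) \<and> (\<forall>j. (\<Sum>i\<in>UNIV. z i j) = 1)"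
proof -
  define r where "r i = (\<Sum>j\<in>UNIV. y i j)" for i
  define s where "s j = (\<Sum>i\<in>UNIV. y i j)" for j
  define D where "D = (\<Sum>i\<in>UNIV. 1 - r i)"
  have D2: "D = (\<Sum>j\<in>UNIV. 1 - s j)"
  proof -
    have "D = real CARD('n) - (\<Sum>i\<in>UNIV. r i)" unfolding D_def by (simp add: sum_subtractf)
    also have "(\<Sum>i\<in>UNIV. r i) = (\<Sum>j\<in>UNIV. s j)" unfolding r_def s_def by (rule sum.swap)
    finally show ?thesis by (simp add: sum_subtractf)
  qed
  have r1: "1 - r i \<ge> 0" for i using rows r_def by simp
  have s1: "1 - s j \<ge> 0" for j using cols s_def by simp
  show ?thesis
  proof (cases "D = 0")
    case True
    have "1 - r i = 0" for i using True r1 unfolding D_def by (simp add: sum_nonneg_eq_0_iff)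
    moreover have "1 - s j = 0" for j using True s1 unfolding D2 by (simp add: sum_nonneg_eq_0_iff)
    ultimately show ?thesis unfolding r_def s_def by (intro exI[of _ y]) auto
  next
    case False
    then have Dpos: "D > 0" unfolding D_def using r1 by (simp add: order_le_neq_trans sum_nonneg)
    define z where "z i j = y i j + (1 - r i) * (1 - s j) / D" for i j
    have "z i j \<ge> y i j" for i j unfolding z_def using r1 s1 Dpos by simp
    moreover have "(\<Sum>j\<in>UNIV. z i j) = 1" for i
    proof -
      have "(\<Sum>j\<in>UNIV. z i j) = r i + (1 - r i) * (\<Sum>j\<in>UNIV. 1 - s j) / D"
        unfolding z_def r_def by (simp add: sum.distrib sum_divide_distrib[symmetric] sum_distrib_left[symmetric])
      also have "\<dots> = 1" using Dpos unfolding D2[symmetric] by simp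
      finally show ?thesis .
    qed
    moreover have "(\<Sum>i\<in>UNIV. z i j) = 1" for j
    proof -
      have "(\<Sum>i\<in>UNIV. z i j) = s j + (\<Sum>i\<in>UNIV. 1 - r i) * (1 - s j) / D"
        unfolding z_def s_def by (simp add: sum.distrib sum_divide_distrib[symmetric] sum_distrib_right[symmetric])
      also have "\<dots> = 1" using Dpos unfolding D_def[symmetric] by simp
      finally show ?thesis .
    qed
    ultimately show ?thesis by blast
  qed
qed

definition pmat :: "('n \<Rightarrow> 'n) \<Rightarrow> 'n \<Rightarrow> 'n \<Rightarrow> real" where
  "pmat \<pi> = (\<lambda>i j. if \<pi> i = j then 1 else 0)"

lemma pmat_rows: "(\<Sum>j\<in>UNIV. pmat \<pi> i j) = (1::real)" for \<pi> :: "'n::finite \<Rightarrow> 'n"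
  unfolding pmat_def by simp

lemma pmat_cols: "\<pi> permutes (UNIV::'n::finite set) \<Longrightarrow> (\<Sum>i\<in>UNIV. pmat \<pi> i j) = (1::real)"
proof -
  assume p: "\<pi> permutes (UNIV::'n set)"
  have "(\<Sum>i\<in>UNIV. pmat \<pi> i j) = (\<Sum>i\<in>UNIV. (if inv \<pi> j = i then 1 else 0::real))"
    unfolding pmat_def using permutes_inv_eq[OF p] by (intro sum.cong) auto
  then show ?thesis by simp
qed

lemma perm_matrices_pmat: "s \<in> perm_matrices \<longleftrightarrow> (\<exists>\<pi>. \<pi> permutes UNIV \<and> s = pmat \<pi>)"
  unfolding perm_matrices_def pmat_def by simp

lemma cinner_pmat: "cinner c Q (pmat \<pi>) = (\<Sum>i\<in>UNIV. c i (\<pi> i) * Q i (\<pi> i))"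
  unfolding cinner_def pmat_def by (simp add: if_distrib cong: if_cong)

lemma mw_ge:
  fixes Q c y :: "'n::finite \<Rightarrow> 'n \<Rightarrow> real"
  assumes c_pos: "\<forall>i j. c i j > 0" and Qnn: "\<forall>i j. Q i j \<ge> 0" and s: "s \<in> maxweight_set c Q"
    and nn: "\<forall>i j. y i j \<ge> 0" and rows: "\<forall>i. (\<Sum>j\<in>UNIV. y i j) \<le> 1"
    and cols: "\<forall>j. (\<Sum>i\<in>UNIV. y i j) \<le> 1"
  shows "cinner c Q y \<le> cinner c Q s"
proof -
  obtain z where z: "\<forall>i j. z i j \<ge> y i j" "\<forall>i. (\<Sum>j\<in>UNIV. z i j) = 1" "\<forall>j. (\<Sum>i\<in>UNIV. z i j) = 1"
    using dominate[OF nn rows cols] by blast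
  have "cinner c Q y \<le> cinner c Q z"
    unfolding cinner_def using c_pos Qnn z(1)
    by (intro sum_mono mult_left_mono) (auto simp: less_imp_le)
  also have "cinner c Q z = (\<Sum>i\<in>UNIV. \<Sum>j\<in>UNIV. (c i j * Q i j) * z i j)"
    unfolding cinner_def ..
  also have "\<dots> \<le> 1 * pmax (\<lambda>i j. c i j * Q i j)"
  proof (rule birk)
    show "\<forall>i j. 0 \<le> z i j" using nn z(1) by (meson order_trans)
  qed (use z in auto)
  also obtain \<pi> where \<pi>: "\<pi> permutes UNIV" "pmax (\<lambda>i j. c i j * Q i j) = (\<Sum>i\<in>UNIV. c i (\<pi> i) * Q i (\<pi> i))"
    using pmax_attained by blast
  then have "1 * pmax (\<lambda>i j. c i j * Q i j) = cinner c Q (pmat \<pi>)" by (simp add: cinner_pmat)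
  also have "\<dots> \<le> cinner c Q s"
  proof -
    have "pmat \<pi> \<in> perm_matrices" using perm_matrices_pmat \<pi>(1) by blast
    then show ?thesis using s unfolding maxweight_set_def by blast
  qed
  finally show ?thesis .
qed

lemma cone_inner_ds:
  fixes k z1 z2 :: "'n::finite \<Rightarrow> 'n \<Rightarrow> real"
  assumes c_pos: "\<forall>i j. c i j > 0" and kK: "k \<in> cone_K c"
    and "\<forall>i. (\<Sum>j\<in>UNIV. z1 i j) = 1" "\<forall>j. (\<Sum>i\<in>UNIV. z1 i j) = 1"
    and "\<forall>i. (\<Sum>j\<in>UNIV. z2 i j) = 1" "\<forall>j. (\<Sum>i\<in>UNIV. z2 i j) = 1"
  shows "cinner c k z1 = cinner c k z2"
proof -
  obtain w wt where w: "\<forall>i j. k i j = (w i + wt j) / c i j"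
    using kK unfolding cone_K_def by blast
  have gen: "cinner c k z = (\<Sum>i\<in>UNIV. w i) + (\<Sum>j\<in>UNIV. wt j)"
    if r: "\<forall>i. (\<Sum>j\<in>UNIV. z i j) = 1" and cl: "\<forall>j. (\<Sum>i\<in>UNIV. z i j) = 1" for z
  proof -
    have "cinner c k z = (\<Sum>i\<in>UNIV. \<Sum>j\<in>UNIV. w i * z i j + wt j * z i j)"
      unfolding cinner_def using w c_pos by (intro sum.cong refl) (auto simp: field_simps less_imp_neq[symmetric])
    also have "\<dots> = (\<Sum>i\<in>UNIV. w i * (\<Sum>j\<in>UNIV. z i j)) + (\<Sum>i\<in>UNIV. \<Sum>j\<in>UNIV. wt j * z i j)"
      by (simp add: sum.distrib sum_distrib_left)
    also have "(\<Sum>i\<in>UNIV. \<Sum>j\<in>UNIV. wt j * z i j) = (\<Sum>j\<in>UNIV. wt j * (\<Sum>i\<in>UNIV. z i j))"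
      by (subst sum.swap) (simp add: sum_distrib_left)
    finally show ?thesis using r cl by simp
  qed
  show ?thesis using gen assms(3-6) by simp
qed


lemma perm_matrices_finite: "finite (perm_matrices :: ('n::finite \<Rightarrow> 'n \<Rightarrow> real) set)"
proof -
  have "perm_matrices = pmat ` {\<pi>. \<pi> permutes (UNIV::'n set)}"
    using perm_matrices_pmat by blast
  moreover have "finite (pmat ` {\<pi>. \<pi> permutes (UNIV::'n set)})"
    by (intro finite_imageI finite_permutations) simp
  ultimately show ?thesis by simp
qed

lemma mw_nonempty:
  fixes c Q :: "'n::finite \<Rightarrow> 'n \<Rightarrow> real"
  shows "maxweight_set c Q \<noteq> {}"
proof -
  obtain \<pi> where \<pi>: "\<pi> permutes UNIV" "pmax (\<lambda>i j. c i j * Q i j) = (\<Sum>i\<in>UNIV. c i (\<pi> i) * Q i (\<pi> i))"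
    using pmax_attained by blast
  have "pmat \<pi> \<in> maxweight_set c Q"
    unfolding maxweight_set_def
  proof (intro CollectI conjI ballI)
    show "pmat \<pi> \<in> perm_matrices" using \<pi>(1) perm_matrices_pmat by blast
    fix s' :: "'n \<Rightarrow> 'n \<Rightarrow> real" assume "s' \<in> perm_matrices"
    then obtain \<sigma> where \<sigma>: "\<sigma> permutes UNIV" "s' = pmat \<sigma>" using perm_matrices_pmat by blast
    have "cinner c Q s' = (\<Sum>i\<in>UNIV. c i (\<sigma> i) * Q i (\<sigma> i))" using \<sigma> by (simp add: cinner_pmat)
    also have "\<dots> \<le> pmax (\<lambda>i j. c i j * Q i j)" using pmax_ge[OF \<sigma>(1), of "\<lambda>i j. c i j * Q i j"] by simp
    finally show "cinner c Q s' \<le> cinner c Q (pmat \<pi>)" using \<pi>(2) by (simp add: cinner_pmat)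
  qed
  then show ?thesis by blast
qed

lemma mw_finite:
  fixes c Q :: "'n::finite \<Rightarrow> 'n \<Rightarrow> real"
  shows "finite (maxweight_set c Q)"
  unfolding maxweight_set_def by (rule finite_subset[OF _ perm_matrices_finite]) auto

lemma step_support:
  fixes p :: "'n::finite \<Rightarrow> 'n \<Rightarrow> nat pmf"
  assumes supp: "\<forall>i j. set_pmf (p i j) \<subseteq> {0..A_max}" and AS: "AS \<in> set_pmf (step_pmf c p Q)"
  shows "snd AS \<in> maxweight_set c Q" and "\<And>i j. 0 \<le> fst AS i j \<and> fst AS i j \<le> real A_max"
proof -
  have sp: "set_pmf (step_pmf c p Q) = (\<lambda>a i j. real (a (i, j))) ` set_pmf (Pi_pmf UNIV 0 (\<lambda>(i, j). p i j)) \<times> maxweight_set c Q"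
    unfolding step_pmf_def by (simp add: set_pmf_of_set[OF mw_nonempty mw_finite])
  then show "snd AS \<in> maxweight_set c Q" using AS by auto
  fix i j
  obtain a where a: "a \<in> set_pmf (Pi_pmf UNIV 0 (\<lambda>(i, j). p i j))" "fst AS = (\<lambda>i j. real (a (i, j)))"
    using AS sp by auto
  have "a (i,j) \<in> set_pmf (p i j)" using a(1) by (simp add: set_Pi_pmf PiE_dflt_def)
  then have "a (i,j) \<in> {0..A_max}" using supp by blast
  then have "a (i,j) \<le> A_max" by simp
  then show "0 \<le> fst AS i j \<and> fst AS i j \<le> real A_max" using a(2) by simp
qed

lemma step_finite:
  fixes p :: "'n::finite \<Rightarrow> 'n \<Rightarrow> nat pmf"
  assumes supp: "\<forall>i j. set_pmf (p i j) \<subseteq> {0..A_max}"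
  shows "finite (set_pmf (step_pmf c p Q))"
proof -
  have sp: "set_pmf (step_pmf c p Q) = (\<lambda>a i j. real (a (i, j))) ` set_pmf (Pi_pmf UNIV 0 (\<lambda>(i, j). p i j)) \<times> maxweight_set c Q"
    unfolding step_pmf_def by (simp add: set_pmf_of_set[OF mw_nonempty mw_finite])
  have "finite (set_pmf (p i j))" for i j using supp finite_subset[of _ "{0..A_max}"] by blast
  then have "finite (set_pmf (Pi_pmf UNIV 0 (\<lambda>(i, j). p i j)))"
    by (auto simp: set_Pi_pmf intro!: finite_PiE_dflt)
  then show ?thesis unfolding sp by (intro finite_cartesian_product finite_imageI mw_finite)
qed

lemma step_exp_component:
  fixes p :: "'n::finite \<Rightarrow> 'n \<Rightarrow> nat pmf"
  shows "measure_pmf.expectation (step_pmf c p Q) (\<lambda>AS. fst AS i j) = measure_pmf.expectation (p i j) real"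
proof -
  let ?A = "map_pmf (\<lambda>a i j. real (a (i, j))) (Pi_pmf UNIV 0 (\<lambda>(i, j). p i j))"
  let ?B = "pmf_of_set (maxweight_set c Q)"
  have "measure_pmf.expectation (step_pmf c p Q) (\<lambda>AS. fst AS i j)
      = measure_pmf.expectation (map_pmf fst (pair_pmf ?A ?B)) (\<lambda>a. a i j)"
    unfolding step_pmf_def by simp
  also have "\<dots> = measure_pmf.expectation ?A (\<lambda>a. a i j)" by (simp add: map_fst_pair_pmf)
  also have "\<dots> = measure_pmf.expectation (Pi_pmf UNIV 0 (\<lambda>(i, j). p i j)) (\<lambda>a. real (a (i,j)))" by simp
  also have "\<dots> = measure_pmf.expectation (map_pmf (\<lambda>f. f (i,j)) (Pi_pmf UNIV 0 (\<lambda>(i, j). p i j))) real" by simp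
  also have "map_pmf (\<lambda>f. f (i,j)) (Pi_pmf UNIV 0 (\<lambda>(i, j). p i j)) = p i j"
    by (subst Pi_pmf_component) auto
  finally show ?thesis .
qed



lemma pm_entry: "s \<in> perm_matrices \<Longrightarrow> s i j = 0 \<or> s i j = 1"
  unfolding perm_matrices_def by auto

lemma pm_ds: "s \<in> perm_matrices \<Longrightarrow> (\<forall>i. (\<Sum>j\<in>UNIV. s i j) = 1) \<and> (\<forall>j. (\<Sum>i\<in>UNIV. s i j) = (1::real))"
  for s :: "'n::finite \<Rightarrow> 'n \<Rightarrow> real"
  using perm_matrices_pmat pmat_rows pmat_cols by metis

lemma nat_lt1: "(x::real) \<in> \<nat> \<Longrightarrow> x < 1 \<Longrightarrow> x = 0"
  by (metis Nats_cases of_nat_0 of_nat_1 of_nat_less_iff less_one)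

lemma emb_norm_bound:
  assumes c_pos: "\<forall>i j. c i j > 0" and b: "\<forall>i j. \<bar>x i j\<bar> \<le> B"
  shows "norm (emb c x) \<le> B * sqrt (\<Sum>i\<in>UNIV. \<Sum>j\<in>UNIV. c i j)"
proof -
  have B0: "B \<ge> 0" using b by (meson abs_ge_zero order_trans)
  have "cinner c x x \<le> (\<Sum>i\<in>UNIV. \<Sum>j\<in>UNIV. B\<^sup>2 * c i j)"
    unfolding cinner_def
  proof (intro sum_mono)
    fix i j
    have "x i j * x i j \<le> B\<^sup>2"
      using b abs_le_square_iff[of "x i j" B] B0 by (simp add: power2_eq_square abs_of_nonneg)
    then show "c i j * x i j * x i j \<le> B\<^sup>2 * c i j"
      using c_pos by (simp add: mult.assoc mult.commute mult_left_mono less_imp_le)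
  qed
  also have "\<dots> = B\<^sup>2 * (\<Sum>i\<in>UNIV. \<Sum>j\<in>UNIV. c i j)" by (simp add: sum_distrib_left)
  finally have "sqrt (cinner c x x) \<le> sqrt (B\<^sup>2 * (\<Sum>i\<in>UNIV. \<Sum>j\<in>UNIV. c i j))" by simp
  also have "\<dots> = B * sqrt (\<Sum>i\<in>UNIV. \<Sum>j\<in>UNIV. c i j)" using B0 by (simp add: real_sqrt_mult)
  finally show ?thesis using cnorm_emb[OF c_pos] unfolding cnorm_def by simp
qed

lemma sqrt_drift: "(W::real) > 0 \<Longrightarrow> u \<ge> 0 \<Longrightarrow> u - W \<le> (u\<^sup>2 - W\<^sup>2) / (2 * W)"
proof -
  assume W: "W > 0" and "u \<ge> 0"
  have "0 \<le> (u - W)\<^sup>2" by simp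
  then have "2 * W * (u - W) \<le> u\<^sup>2 - W\<^sup>2" by (simp add: power2_eq_square algebra_simps)
  then show ?thesis using W by (simp add: pos_le_divide_eq mult.commute)
qed

lemma update_facts:
  fixes Q a s :: "'n::finite \<Rightarrow> 'n \<Rightarrow> real"
  assumes QN: "\<forall>i j. Q i j \<in> \<nat>" and a: "\<forall>i j. 0 \<le> a i j \<and> a i j \<le> real A_max"
    and s: "s \<in> perm_matrices"
  shows "\<bar>next_Q Q a s i j - Q i j\<bar> \<le> real A_max + 1"
    and "unused Q a s i j \<ge> 0"
    and "unused Q a s i j \<noteq> 0 \<Longrightarrow> Q i j = 0"
    and "next_Q Q a s i j - Q i j = a i j - s i j + unused Q a s i j"
proof -
  have Q0: "Q i j \<ge> 0" using QN by (metis Nats_cases of_nat_0_le_iff)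
  have s01: "s i j = 0 \<or> s i j = 1" by (rule pm_entry[OF s])
  have ai: "0 \<le> a i j" "a i j \<le> real A_max" using a by auto
  show "next_Q Q a s i j - Q i j = a i j - s i j + unused Q a s i j"
    unfolding next_Q_def by simp
  show "\<bar>next_Q Q a s i j - Q i j\<bar> \<le> real A_max + 1"
    unfolding next_Q_def unused_def using Q0 s01 ai by (auto simp: max_def abs_if)
  show "unused Q a s i j \<ge> 0" unfolding unused_def by simp
  assume "unused Q a s i j \<noteq> 0"
  then have "Q i j < 1" unfolding unused_def using s01 ai by (auto simp: max_def split: if_splits)
  then show "Q i j = 0" using QN nat_lt1 by blast
qed


lemma s_lower:
  fixes c \<nu> Q s :: "'n::finite \<Rightarrow> 'n \<Rightarrow> real"
  assumes c_pos: "\<forall>i j. c i j > 0"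
    and \<nu>rows: "\<forall>i. (\<Sum>j\<in>UNIV. \<nu> i j) = 1" and \<nu>cols: "\<forall>j. (\<Sum>i\<in>UNIV. \<nu> i j) = 1"
    and \<delta>pos: "\<delta> > 0" and \<delta>le: "\<forall>i j. \<delta> \<le> \<nu> i j * sqrt (c i j)"
    and Qnn: "\<forall>i j. Q i j \<ge> 0" and Wpos: "W_perp c Q > 0"
    and s: "s \<in> maxweight_set c Q"
  shows "cinner c (perp_K c Q) s \<ge> cinner c (perp_K c Q) \<nu> + \<delta> * W_perp c Q"
proof -
  define W where "W = W_perp c Q"
  define y where "y = proj_K c Q"
  define q where "q = perp_K c Q"
  have q_eq: "q = (\<lambda>i j. Q i j - y i j)" unfolding q_def y_def perp_K_def ..
  have Q_eq: "Q = (\<lambda>i j. y i j + q i j)" unfolding q_eq by simp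
  have yK: "y \<in> cone_K c" unfolding y_def by (rule proj_K_min(1)[OF c_pos])
  have Wq: "W = norm (emb c q)" unfolding W_def q_eq y_def emb_diff by (rule W_perp_emb[OF c_pos])
  have W0: "W > 0" using Wpos W_def by simp
  have sperm: "s \<in> perm_matrices" using s unfolding maxweight_set_def by simp
  have sds: "\<forall>i. (\<Sum>j\<in>UNIV. s i j) = 1" "\<forall>j. (\<Sum>i\<in>UNIV. s i j) = 1" using pm_ds[OF sperm] by auto
  have qb: "\<bar>q i j\<bar> * sqrt (c i j) \<le> W" for i j
  proof -
    have "\<bar>emb c q $ (i,j)\<bar> \<le> W" unfolding Wq by (rule component_le_norm_cart)
    then show ?thesis using c_pos by (simp add: emb_nth abs_mult mult.commute less_imp_le)
  qed
  define xp where "xp = (\<lambda>i j. \<nu> i j + (\<delta> / W) * q i j)"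
  have xnn: "\<forall>i j. xp i j \<ge> 0"
  proof (intro allI)
    fix i j
    have "\<delta> * \<bar>q i j\<bar> \<le> \<nu> i j * sqrt (c i j) * \<bar>q i j\<bar>" using \<delta>le by (simp add: mult_right_mono)
    also have "\<dots> \<le> \<nu> i j * W"
    proof -
      have "\<nu> i j \<ge> 0"
      proof -
        have "\<nu> i j * sqrt (c i j) > 0" using \<delta>le \<delta>pos by (meson less_le_trans)
        moreover have "c i j > 0" using c_pos by blast
        ultimately show ?thesis by (simp add: zero_less_mult_iff)
      qed
      then have "\<nu> i j * (\<bar>q i j\<bar> * sqrt (c i j)) \<le> \<nu> i j * W" using qb[of i j] by (rule mult_left_mono[rotated])
      then show ?thesis by (simp add: algebra_simps)
    qed
    finally have "(\<delta> / W) * \<bar>q i j\<bar> \<le> \<nu> i j" using W0 by (simp add: divide_le_eq mult.commute)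
    moreover have "- ((\<delta> / W) * \<bar>q i j\<bar>) \<le> (\<delta> / W) * q i j" using \<delta>pos W0
      by (simp add: abs_if mult_nonneg_nonneg)
    ultimately show "xp i j \<ge> 0" unfolding xp_def by linarith
  qed
  have xrows: "\<forall>i. (\<Sum>j\<in>UNIV. xp i j) \<le> 1"
  proof
    fix i
    have "(\<Sum>j\<in>UNIV. xp i j) = 1 + (\<delta> / W) * (\<Sum>j\<in>UNIV. q i j)"
      unfolding xp_def using \<nu>rows by (simp add: sum.distrib sum_distrib_left)
    moreover have "(\<Sum>j\<in>UNIV. q i j) \<le> 0" unfolding q_def by (rule perp_rowsum[OF c_pos])
    moreover have "\<delta> / W \<ge> 0" using \<delta>pos W0 by simp
    ultimately have "(\<delta> / W) * (\<Sum>j\<in>UNIV. q i j) \<le> 0" by (simp add: mult_nonneg_nonpos del: times_divide_eq_left)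
    then show "(\<Sum>j\<in>UNIV. xp i j) \<le> 1" using \<open>(\<Sum>j\<in>UNIV. xp i j) = _\<close> by linarith
  qed
  have xcols: "\<forall>j. (\<Sum>i\<in>UNIV. xp i j) \<le> 1"
  proof
    fix j
    have "(\<Sum>i\<in>UNIV. xp i j) = 1 + (\<delta> / W) * (\<Sum>i\<in>UNIV. q i j)"
      unfolding xp_def using \<nu>cols by (simp add: sum.distrib sum_distrib_left)
    moreover have "(\<Sum>i\<in>UNIV. q i j) \<le> 0" unfolding q_def by (rule perp_colsum[OF c_pos])
    moreover have "\<delta> / W \<ge> 0" using \<delta>pos W0 by simp
    ultimately have "(\<delta> / W) * (\<Sum>i\<in>UNIV. q i j) \<le> 0" by (simp add: mult_nonneg_nonpos del: times_divide_eq_left)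
    then show "(\<Sum>i\<in>UNIV. xp i j) \<le> 1" using \<open>(\<Sum>i\<in>UNIV. xp i j) = _\<close> by linarith
  qed
  have mw: "cinner c Q xp \<le> cinner c Q s" by (rule mw_ge[OF c_pos Qnn s xnn xrows xcols])
  have Qq: "cinner c Q q = W\<^sup>2"
  proof -
    have "cinner c Q q = cinner c y q + cinner c q q" by (subst Q_eq) (rule cinner_add_left)
    also have "cinner c y q = 0" using perp_props(1)[OF c_pos, of Q] unfolding q_def y_def by (simp add: cinner_sym)
    also have "cinner c q q = W\<^sup>2" unfolding q_def W_def by (rule perp_props(3)[OF c_pos])
    finally show ?thesis by simp
  qed
  have "cinner c Q xp = cinner c Q \<nu> + (\<delta> / W) * cinner c Q q"
    unfolding xp_def by (simp only: cinner_add_right cinner_scale_right)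
  also have "\<dots> = cinner c Q \<nu> + \<delta> * W" using Qq W0 by (simp add: power2_eq_square)
  finally have A: "cinner c Q \<nu> + \<delta> * W \<le> cinner c Q s" using mw by simp
  have ys: "cinner c y s = cinner c y \<nu>"
    by (rule cone_inner_ds[OF c_pos yK]) (use sds \<nu>rows \<nu>cols in auto)
  have "cinner c q s = cinner c Q s - cinner c y s" unfolding q_eq by (rule cinner_diff_left)
  moreover have "cinner c q \<nu> = cinner c Q \<nu> - cinner c y \<nu>" unfolding q_eq by (rule cinner_diff_left)
  ultimately show ?thesis using A ys unfolding q_def W_def by simp
qed


lemma drift_bound:
  fixes c \<nu> Q :: "'n::finite \<Rightarrow> 'n \<Rightarrow> real" and p :: "'n \<Rightarrow> 'n \<Rightarrow> nat pmf"
  assumes c_pos: "\<forall>i j. c i j > 0"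
    and \<nu>rows: "\<forall>i. (\<Sum>j\<in>UNIV. \<nu> i j) = 1" and \<nu>cols: "\<forall>j. (\<Sum>i\<in>UNIV. \<nu> i j) = 1"
    and \<delta>pos: "\<delta> > 0" and \<delta>le: "\<forall>i j. \<delta> \<le> \<nu> i j * sqrt (c i j)"
    and supp: "\<forall>i j. set_pmf (p i j) \<subseteq> {0..A_max}"
    and mean: "\<forall>i j. measure_pmf.expectation (p i j) real = (1 - \<epsilon>) * \<nu> i j"
    and \<epsilon>0: "\<epsilon> \<ge> 0"
    and QN: "\<forall>i j. Q i j \<in> \<nat>" and Wpos: "W_perp c Q > 0"
  shows "measure_pmf.expectation (step_pmf c p Q) (delta_W_perp c Q)
     \<le> \<epsilon> * norm (emb c \<nu>) - \<delta> + ((real A_max + 1) * sqrt (\<Sum>i\<in>UNIV. \<Sum>j\<in>UNIV. c i j))\<^sup>2 / (2 * W_perp c Q)"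
proof -
  define W where "W = W_perp c Q"
  define y where "y = proj_K c Q"
  define q where "q = perp_K c Q"
  define DD where "DD = (real A_max + 1) * sqrt (\<Sum>i\<in>UNIV. \<Sum>j\<in>UNIV. c i j)"
  define M where "M = step_pmf c p Q"
  have q_eq: "q = (\<lambda>i j. Q i j - y i j)" unfolding q_def y_def perp_K_def ..
  have yK: "y \<in> cone_K c" unfolding y_def by (rule proj_K_min(1)[OF c_pos])
  have Wq: "W = norm (emb c q)" unfolding W_def q_eq y_def emb_diff by (rule W_perp_emb[OF c_pos])
  have W0: "W > 0" using Wpos W_def by simp
  have Qnn: "\<forall>i j. Q i j \<ge> 0" using QN by (metis Nats_cases of_nat_0_le_iff)
  define G where "G AS = (2 * (cinner c q (fst AS) - cinner c q \<nu> - \<delta> * W) + DD\<^sup>2) / (2 * W)" for AS :: "('n \<Rightarrow> 'n \<Rightarrow> real) \<times> ('n \<Rightarrow> 'n \<Rightarrow> real)"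
  have pw: "delta_W_perp c Q AS \<le> G AS" if AS: "AS \<in> set_pmf M" for AS
  proof -
    define a where "a = fst AS"
    define s where "s = snd AS"
    have s: "s \<in> maxweight_set c Q" unfolding s_def using step_support(1)[OF supp] AS M_def by blast
    have sperm: "s \<in> perm_matrices" using s unfolding maxweight_set_def by simp
    have a: "\<forall>i j. 0 \<le> a i j \<and> a i j \<le> real A_max" unfolding a_def using step_support(2)[OF supp] AS M_def by blast
    define Q' where "Q' = next_Q Q a s"
    define \<Delta> where "\<Delta> = (\<lambda>i j. Q' i j - Q i j)"
    define u where "u = unused Q a s"
    have \<Delta>b: "\<forall>i j. \<bar>\<Delta> i j\<bar> \<le> real A_max + 1" unfolding \<Delta>_def Q'_def using update_facts(1)[OF QN a sperm] by blast
    have n\<Delta>: "norm (emb c \<Delta>) \<le> DD" unfolding DD_def by (rule emb_norm_bound[OF c_pos \<Delta>b])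
    have n\<Delta>2: "(norm (emb c \<Delta>))\<^sup>2 \<le> DD\<^sup>2" using n\<Delta> by (simp add: power_mono)
    have W'le: "W_perp c Q' \<le> norm (emb c Q' - emb c y)" by (rule W_perp_le[OF c_pos yK])
    have ed: "emb c Q' - emb c y = emb c q + emb c \<Delta>" unfolding q_eq \<Delta>_def emb_diff by simp
    define v where "v = norm (emb c q + emb c \<Delta>)"
    have "v - W \<le> (v\<^sup>2 - W\<^sup>2) / (2 * W)" by (rule sqrt_drift[OF W0]) (simp add: v_def)
    also have "v\<^sup>2 - W\<^sup>2 = 2 * inner (emb c q) (emb c \<Delta>) + (norm (emb c \<Delta>))\<^sup>2"
      unfolding v_def Wq by (simp add: power2_norm_eq_inner inner_add_left inner_add_right inner_commute)
    finally have st1: "W_perp c Q' - W \<le> (2 * inner (emb c q) (emb c \<Delta>) + (norm (emb c \<Delta>))\<^sup>2) / (2 * W)"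
      using W'le ed v_def by simp
    have \<Delta>eq: "\<Delta> = (\<lambda>i j. (a i j - s i j) + u i j)" unfolding \<Delta>_def Q'_def u_def
      using update_facts(4)[OF QN a sperm] by (simp add: fun_eq_iff)
    have "inner (emb c q) (emb c \<Delta>) = cinner c q \<Delta>" by (simp add: cinner_emb[OF c_pos])
    also have "\<dots> = cinner c q (\<lambda>i j. (a i j - s i j) + u i j)" using \<Delta>eq by simp
    also have "cinner c q (\<lambda>i j. (a i j - s i j) + u i j) = cinner c q a - cinner c q s + cinner c q u"
      by (simp only: cinner_add_right cinner_diff_right)
    finally have inn: "inner (emb c q) (emb c \<Delta>) = cinner c q a - cinner c q s + cinner c q u" .
    have cu: "cinner c q u \<le> 0" unfolding cinner_def
    proof (intro sum_nonpos)
      fix i j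
      show "c i j * q i j * u i j \<le> 0"
      proof (cases "u i j = 0")
        case False
        then have "Q i j = 0" unfolding u_def by (rule update_facts(3)[OF QN a sperm])
        then have "q i j \<le> 0" unfolding q_eq using cone_K_nonneg[OF c_pos yK] by simp
        moreover have "u i j \<ge> 0" unfolding u_def by (rule update_facts(2)[OF QN a sperm])
        moreover have "c i j > 0" using c_pos by blast
        ultimately show ?thesis by (simp add: mult_nonpos_nonneg mult_nonneg_nonpos)
      qed simp
    qed
    have cs: "cinner c q s \<ge> cinner c q \<nu> + \<delta> * W"
      unfolding q_def W_def by (rule s_lower[OF c_pos \<nu>rows \<nu>cols \<delta>pos \<delta>le Qnn Wpos s])
    have "2 * inner (emb c q) (emb c \<Delta>) + (norm (emb c \<Delta>))\<^sup>2 \<le> 2 * (cinner c q a - cinner c q \<nu> - \<delta> * W) + DD\<^sup>2"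
      using inn cu cs n\<Delta>2 by (smt (verit))
    then have "(2 * inner (emb c q) (emb c \<Delta>) + (norm (emb c \<Delta>))\<^sup>2) / (2 * W) \<le> G AS"
      unfolding G_def a_def using W0 by (simp add: divide_right_mono)
    moreover have "delta_W_perp c Q AS = W_perp c Q' - W"
      unfolding delta_W_perp_def Q'_def a_def s_def W_def by simp
    ultimately show ?thesis using st1 by simp
  qed
  have fin: "finite (set_pmf M)" unfolding M_def by (rule step_finite[OF supp])
  have int: "integrable M f" for f :: "_ \<Rightarrow> real" by (rule integrable_measure_pmf_finite[OF fin])
  have "measure_pmf.expectation M (delta_W_perp c Q) \<le> measure_pmf.expectation M G"
    by (rule integral_mono_AE[OF int int]) (use pw in \<open>simp add: AE_measure_pmf_iff\<close>)
  also have "measure_pmf.expectation M G = (2 * ((1 - \<epsilon>) * cinner c q \<nu> - cinner c q \<nu> - \<delta> * W) + DD\<^sup>2) / (2 * W)"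
  proof -
    have Ea: "measure_pmf.expectation M (\<lambda>AS. cinner c q (fst AS)) = (1 - \<epsilon>) * cinner c q \<nu>"
    proof -
      have "measure_pmf.expectation M (\<lambda>AS. cinner c q (fst AS))
          = (\<Sum>i\<in>UNIV. \<Sum>j\<in>UNIV. measure_pmf.expectation M (\<lambda>AS. c i j * q i j * fst AS i j))"
        unfolding cinner_def by (simp add: integral_sum int)
      also have "\<dots> = (\<Sum>i\<in>UNIV. \<Sum>j\<in>UNIV. c i j * q i j * ((1 - \<epsilon>) * \<nu> i j))"
        unfolding M_def by (simp add: step_exp_component mean)
      also have "\<dots> = (1 - \<epsilon>) * cinner c q \<nu>"
        unfolding cinner_def by (simp add: sum_distrib_left algebra_simps)
      finally show ?thesis .
    qed
    have "G = (\<lambda>AS. (1 / W) * cinner c q (fst AS) + (2 * (- cinner c q \<nu> - \<delta> * W) + DD\<^sup>2) / (2 * W))"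
      unfolding G_def using W0 by (auto simp: fun_eq_iff field_simps)
    then have "measure_pmf.expectation M G = (1 / W) * ((1 - \<epsilon>) * cinner c q \<nu>) + (2 * (- cinner c q \<nu> - \<delta> * W) + DD\<^sup>2) / (2 * W)"
      using Ea by (simp add: int)
    also have "\<dots> = (2 * ((1 - \<epsilon>) * cinner c q \<nu> - cinner c q \<nu> - \<delta> * W) + DD\<^sup>2) / (2 * W)"
      using W0 by (simp add: field_simps)
    finally show ?thesis .
  qed
  also have "\<dots> = - \<epsilon> * cinner c q \<nu> / W - \<delta> + DD\<^sup>2 / (2 * W)"
    using W0 by (simp add: field_simps)
  also have "\<dots> \<le> \<epsilon> * norm (emb c \<nu>) - \<delta> + DD\<^sup>2 / (2 * W)"
  proof -
    have "\<bar>cinner c q \<nu>\<bar> \<le> W * norm (emb c \<nu>)"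
      unfolding cinner_emb[OF c_pos] Wq by (rule Cauchy_Schwarz_ineq2)
    then have "- cinner c q \<nu> \<le> W * norm (emb c \<nu>)" by linarith
    then have "\<epsilon> * (- cinner c q \<nu>) \<le> \<epsilon> * (W * norm (emb c \<nu>))" using \<epsilon>0 by (rule mult_left_mono)
    then have "(\<epsilon> * (- cinner c q \<nu>)) / W \<le> (\<epsilon> * (W * norm (emb c \<nu>))) / W" using W0
      by (intro divide_right_mono) auto
    then show ?thesis using W0 by simp
  qed
  finally show ?thesis unfolding M_def DD_def W_def .
qed


lemma part_i:
  fixes c Q :: "'n::finite \<Rightarrow> 'n \<Rightarrow> real" and p :: "'n \<Rightarrow> 'n \<Rightarrow> nat pmf"
  assumes c_pos: "\<forall>i j. c i j > 0"
    and supp: "\<forall>i j. set_pmf (p i j) \<subseteq> {0..A_max}"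
    and QN: "\<forall>i j. Q i j \<in> \<nat>"
  shows "AE AS in measure_pmf (step_pmf c p Q). \<bar>delta_W_perp c Q AS\<bar> \<le> (real A_max + 1) * sqrt (\<Sum>i\<in>UNIV. \<Sum>j\<in>UNIV. c i j)"
  unfolding AE_measure_pmf_iff
proof
  fix AS assume AS: "AS \<in> set_pmf (step_pmf c p Q)"
  define a where "a = fst AS"
  define s where "s = snd AS"
  have s: "s \<in> maxweight_set c Q" unfolding s_def using step_support(1)[OF supp] AS by blast
  have sperm: "s \<in> perm_matrices" using s unfolding maxweight_set_def by simp
  have a: "\<forall>i j. 0 \<le> a i j \<and> a i j \<le> real A_max" unfolding a_def using step_support(2)[OF supp] AS by blast
  define Q' where "Q' = next_Q Q a s"
  have \<Delta>b: "\<forall>i j. \<bar>(\<lambda>i j. Q' i j - Q i j) i j\<bar> \<le> real A_max + 1" unfolding Q'_def using update_facts(1)[OF QN a sperm] by blast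
  have "\<bar>delta_W_perp c Q AS\<bar> = \<bar>W_perp c Q' - W_perp c Q\<bar>"
    unfolding delta_W_perp_def Q'_def a_def s_def by simp
  also have "\<dots> \<le> norm (emb c Q' - emb c Q)" by (rule W_perp_lip[OF c_pos])
  also have "\<dots> = norm (emb c (\<lambda>i j. Q' i j - Q i j))" by (simp add: emb_diff)
  also have "\<dots> \<le> (real A_max + 1) * sqrt (\<Sum>i\<in>UNIV. \<Sum>j\<in>UNIV. c i j)" by (rule emb_norm_bound[OF c_pos \<Delta>b])
  finally show "\<bar>delta_W_perp c Q AS\<bar> \<le> (real A_max + 1) * sqrt (\<Sum>i\<in>UNIV. \<Sum>j\<in>UNIV. c i j)" .
qed

theorem mainTheorem3:
  fixes c \<nu> :: "'n::finite \<Rightarrow> 'n \<Rightarrow> real"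
    and A_max :: nat and \<sigma>t :: real
  assumes n_ge2: "CARD('n) \<ge> 2"
    and c_pos: "\<forall>i j. c i j > 0"
    and \<nu>_relint: "(\<chi> i j. \<nu> i j) \<in> rel_interior (doubly_stochastic :: (real^'n^'n) set)"
    and \<nu>_pos: "\<forall>i j. \<nu> i j > 0"
  shows "\<exists>\<eta> \<kappa> D \<epsilon>0. \<eta> > 0 \<and> \<kappa> > 0 \<and> D > 0 \<and> \<epsilon>0 > 0 \<and>
     (\<forall>\<epsilon> p. 0 < \<epsilon> \<and> \<epsilon> \<le> \<epsilon>0
        \<and> (\<forall>i j. set_pmf (p i j) \<subseteq> {0..A_max})
        \<and> (\<forall>i j. measure_pmf.expectation (p i j) real = (1 - \<epsilon>) * \<nu> i j)
        \<and> (\<Sum>i\<in>UNIV. \<Sum>j\<in>UNIV. measure_pmf.variance (p i j) real) \<le> \<sigma>t\<^sup>2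
      \<longrightarrow> (\<forall>Q :: 'n \<Rightarrow> 'n \<Rightarrow> real. (\<forall>i j. Q i j \<in> \<nat>) \<longrightarrow>
            (AE AS in measure_pmf (step_pmf c p Q). \<bar>delta_W_perp c Q AS\<bar> \<le> D)
          \<and> (W_perp c Q \<ge> \<kappa> \<longrightarrow>
               measure_pmf.expectation (step_pmf c p Q) (delta_W_perp c Q) \<le> - \<eta>)))"
proof -
  define Cs where "Cs = (\<Sum>i\<in>UNIV. \<Sum>j\<in>UNIV. c i j)"
  define D where "D = (real A_max + 1) * sqrt Cs"
  define \<delta> where "\<delta> = Min (range (\<lambda>k::'n \<times> 'n. \<nu> (fst k) (snd k) * sqrt (c (fst k) (snd k))))"
  define n\<nu> where "n\<nu> = norm (emb c \<nu>)"
  define \<epsilon>0 where "\<epsilon>0 = \<delta> / (2 * n\<nu> + 1)"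
  define \<kappa> where "\<kappa> = 2 * D\<^sup>2 / \<delta> + 1"
  define \<eta> where "\<eta> = \<delta> / 4"
  have Cspos: "Cs > 0" unfolding Cs_def using c_pos
    by (intro sum_pos) auto
  have Dpos: "D > 0" unfolding D_def using Cspos by simp
  have \<delta>pos: "\<delta> > 0"
  proof -
    have "\<delta> \<in> range (\<lambda>k::'n \<times> 'n. \<nu> (fst k) (snd k) * sqrt (c (fst k) (snd k)))"
      unfolding \<delta>_def by (rule Min_in) auto
    then show ?thesis using \<nu>_pos c_pos by auto
  qed
  have \<delta>le: "\<forall>i j. \<delta> \<le> \<nu> i j * sqrt (c i j)"
  proof (intro allI)
    fix i j
    have "\<delta> \<le> (\<lambda>k::'n \<times> 'n. \<nu> (fst k) (snd k) * sqrt (c (fst k) (snd k))) (i, j)"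
      unfolding \<delta>_def by (rule Min_le[OF finite_imageI[OF finite] rangeI])
    then show "\<delta> \<le> \<nu> i j * sqrt (c i j)" by simp
  qed
  have n\<nu>0: "n\<nu> \<ge> 0" unfolding n\<nu>_def by simp
  have \<epsilon>0pos: "\<epsilon>0 > 0" unfolding \<epsilon>0_def using \<delta>pos n\<nu>0 by simp
  have \<kappa>pos: "\<kappa> > 0" unfolding \<kappa>_def using \<delta>pos by (simp add: add_nonneg_pos)
  have \<eta>pos: "\<eta> > 0" unfolding \<eta>_def using \<delta>pos by simp
  have ds: "(\<chi> i j. \<nu> i j) \<in> (doubly_stochastic :: (real^'n^'n) set)"
    using \<nu>_relint rel_interior_subset by blast
  have \<nu>rows: "\<forall>i. (\<Sum>j\<in>UNIV. \<nu> i j) = 1" and \<nu>cols: "\<forall>j. (\<Sum>i\<in>UNIV. \<nu> i j) = 1"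
    using ds unfolding doubly_stochastic_def by auto
  show ?thesis
  proof (rule exI[of _ \<eta>], rule exI[of _ \<kappa>], rule exI[of _ D], rule exI[of _ \<epsilon>0], intro conjI \<eta>pos \<kappa>pos Dpos \<epsilon>0pos allI impI)
    fix \<epsilon> :: real and p :: "'n \<Rightarrow> 'n \<Rightarrow> nat pmf" and Q :: "'n \<Rightarrow> 'n \<Rightarrow> real"
    assume H: "0 < \<epsilon> \<and> \<epsilon> \<le> \<epsilon>0
        \<and> (\<forall>i j. set_pmf (p i j) \<subseteq> {0..A_max})
        \<and> (\<forall>i j. measure_pmf.expectation (p i j) real = (1 - \<epsilon>) * \<nu> i j)
        \<and> (\<Sum>i\<in>UNIV. \<Sum>j\<in>UNIV. measure_pmf.variance (p i j) real) \<le> \<sigma>t\<^sup>2"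
      and QN: "\<forall>i j. Q i j \<in> \<nat>"
    have supp: "\<forall>i j. set_pmf (p i j) \<subseteq> {0..A_max}" using H by blast
    have mean: "\<forall>i j. measure_pmf.expectation (p i j) real = (1 - \<epsilon>) * \<nu> i j" using H by blast
    show "AE AS in measure_pmf (step_pmf c p Q). \<bar>delta_W_perp c Q AS\<bar> \<le> D"
      unfolding D_def Cs_def by (rule part_i[OF c_pos supp QN])
    assume W\<kappa>: "\<kappa> \<le> W_perp c Q"
    have Wpos: "W_perp c Q > 0" using W\<kappa> \<kappa>pos by linarith
    have "measure_pmf.expectation (step_pmf c p Q) (delta_W_perp c Q)
        \<le> \<epsilon> * n\<nu> - \<delta> + D\<^sup>2 / (2 * W_perp c Q)"
      unfolding n\<nu>_def D_def Cs_def
      by (rule drift_bound[OF c_pos \<nu>rows \<nu>cols \<delta>pos \<delta>le supp mean _ QN Wpos]) (use H in simp)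
    also have "\<epsilon> * n\<nu> \<le> \<delta> / 2"
    proof -
      have "\<epsilon> * n\<nu> \<le> \<epsilon>0 * n\<nu>" using H n\<nu>0 by (simp add: mult_right_mono)
      also have "\<dots> = \<delta> * n\<nu> / (2 * n\<nu> + 1)" unfolding \<epsilon>0_def by simp
      also have "\<dots> \<le> \<delta> / 2" using \<delta>pos n\<nu>0 by (simp add: field_simps)
      finally show ?thesis .
    qed
    also have "D\<^sup>2 / (2 * W_perp c Q) \<le> \<delta> / 4"
    proof -
      have "2 * D\<^sup>2 / \<delta> \<le> W_perp c Q" using W\<kappa> unfolding \<kappa>_def by linarith
      then have "2 * D\<^sup>2 \<le> \<delta> * W_perp c Q" using \<delta>pos by (simp add: divide_le_eq mult.commute)
      then show ?thesis using Wpos by (simp add: divide_le_eq field_simps)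
    qed
    finally show "measure_pmf.expectation (step_pmf c p Q) (delta_W_perp c Q) \<le> - \<eta>"
      unfolding \<eta>_def by linarith
  qed
qed


end
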